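(* Let $n\ge 1$, let $a_1<\dots<a_n$ be keys stored in a sorted array, let $p=(p_1,\dots,p_n)$ be the true probability distribution over keys, and let $\hat p=(\hat p_1,\dots,\hat p_n)$ be any predicted probability distribution over $[n]$. Let $\eta$ be the earth mover's distance between $p$ and $\hat p$. When the target key is $a=a_i$ with probability $p_i$, the algorithm $\mathcal{A}$ described in the context (given $\hat p$) finds the target, and its expected number of comparisons $\sum_{i=1}^n p_i C(a_i)$ satisfies $$\sum_{i=1}^n p_i C(a_i)\;\le\; 4H(p)+8\max(\log\eta+2,\,1)+8 \;=\; O\big(H(p)+\max(\log \eta,0)\big).$$
   Context: All logarithms are base 2. $H(p)=-\sum_{i=1}^n p_i\log p_i$ is the entropy of $p$ (with $0\log 0=0$). The earth mover's distance between distributions $P,Q$ on $[n]$ is $\inf_{\gamma\in\Pi(P,Q)}\mathbb{E}_{(x,y)\sim\gamma}|x-y|$, where $\Pi(P,Q)$ is the set of couplings of $P$ and $Q$ (joint distributions on $[n]\times[n]$ with marginals $P$ and $Q$). A comparison of the target $a$ with a key $a_j$ returns whether $a<a_j$, $a=a_j$ or $a>a_j$, and counts as one query; $C(a_i)$ denotes the number of comparisons made by the algorithm when the target is $a_i$. Algorithm $\mathcal{A}$ (input: $\hat p$ and target $a\in\{a_1,\dots,a_n\}$): maintain a search range $[\ell,r]$ of indices, initially $\ell=1,r=n$, always containing the index of $a$. Run iterations $i=0,1,2,\dots$, each with two phases: (1) Bisection: repeat the following step $2^i$ times (stopping if $a$ is found). With $S=\sum_{j=\ell}^r\hat p_j$,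 pick an index $k\in[\ell,r]$ with $\sum_{j=\ell}^{k-1}\hat p_j\le S/2$ and $\sum_{j=k+1}^{r}\hat p_j\le S/2$; compare $a$ with $a_k$; if equal, return $k$; otherwise replace the range by $[\ell,k-1]$ or $[k+1,r]$ according to the comparison. (2) Binary search at the endpoints: with the current range $[\ell,r]$, set $d=\min(2^{2^i},r-\ell)$; compare $a$ with $a_{\ell+d}$ and $a_{r-d}$ to determine whether $a$ lies in $[a_\ell,a_{\ell+d}]$ or $[a_{r-d},a_r]$. If so, run standard binary search (always querying the middle of the current range) on that index range until $a$ is found. Otherwise start iteration $i+1$ with range $[\ell+d+1,r-d-1]$. *)

theory Defs
  imports Complex_Main
begin

text \<open>Indices are 1-based: keys a 1 < ... < a n, distributions p, ph on {1..n}.\<close>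

definition prob_dist :: "nat \<Rightarrow> (nat \<Rightarrow> real) \<Rightarrow> bool" where
  "prob_dist n p \<longleftrightarrow> (\<forall>i\<in>{1..n}. 0 \<le> p i) \<and> (\<Sum>i=1..n. p i) = 1"

definition entropy :: "nat \<Rightarrow> (nat \<Rightarrow> real) \<Rightarrow> real" where
  "entropy n p = - (\<Sum>i=1..n. (if p i = 0 then 0 else p i * log 2 (p i)))"

definition coupling :: "nat \<Rightarrow> (nat \<Rightarrow> real) \<Rightarrow> (nat \<Rightarrow> real) \<Rightarrow> (nat \<Rightarrow> nat \<Rightarrow> real) \<Rightarrow> bool" where
  "coupling n P Q g \<longleftrightarrow> (\<forall>x\<in>{1..n}. \<forall>y\<in>{1..n}. 0 \<le> g x y)
     \<and> (\<forall>x\<in>{1..n}. (\<Sum>y=1..n. g x y) = P x)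
     \<and> (\<forall>y\<in>{1..n}. (\<Sum>x=1..n. g x y) = Q y)"

definition emd :: "nat \<Rightarrow> (nat \<Rightarrow> real) \<Rightarrow> (nat \<Rightarrow> real) \<Rightarrow> real" where
  "emd n P Q = Inf {c. \<exists>g. coupling n P Q g \<and>
       c = (\<Sum>x=1..n. \<Sum>y=1..n. g x y * \<bar>real x - real y\<bar>)}"

text \<open>max(log eta + 2, 1), reading log 0 = -infinity (so the value is 1 when eta = 0).\<close>
definition eta_term :: "real \<Rightarrow> real" where
  "eta_term eta = (if eta = 0 then 1 else max (log 2 eta + 2) 1)"

text \<open>Valid bisection choice rule: for every range [l,r] inside [n], pick l r is a
  weighted median of ph restricted to [l,r].\<close>
definition valid_pick :: "nat \<Rightarrow> (nat \<Rightarrow> real) \<Rightarrow> (nat \<Rightarrow> nat \<Rightarrow> nat) \<Rightarrow> bool" where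
  "valid_pick n ph pick \<longleftrightarrow> (\<forall>l r. 1 \<le> l \<and> l \<le> r \<and> r \<le> n \<longrightarrow>
     (let k = pick l r; S = (\<Sum>j=l..r. ph j) in
        l \<le> k \<and> k \<le> r \<and> (\<Sum>j=l..k-1. ph j) \<le> S / 2 \<and> (\<Sum>j=k+1..r. ph j) \<le> S / 2))"

text \<open>Each transition out of a non-Done state performs exactly
  one comparison of the target x with a key.
  Bis i j l r: iteration i, bisection phase, j bisection steps left, range [l,r].
  Ends1 i l r / Ends2 i l r: endpoint phase, first / second comparison.
  BS l r: standard binary search on [l,r].\<close>
datatype st = Bis nat nat nat nat | Ends1 nat nat nat | Ends2 nat nat nat | BS nat nat | Done nat

definition dd :: "nat \<Rightarrow> nat \<Rightarrow> nat \<Rightarrow> nat" where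
  "dd i l r = min (2 ^ (2 ^ i)) (r - l)"

fun step :: "(nat \<Rightarrow> 'a::linorder) \<Rightarrow> (nat \<Rightarrow> nat \<Rightarrow> nat) \<Rightarrow> 'a \<Rightarrow> st \<Rightarrow> st" where
  "step a pick x (Bis i j l r) =
     (let k = pick l r in
      if x = a k then Done k
      else let l' = (if x < a k then l else k + 1);
               r' = (if x < a k then k - 1 else r)
           in if j \<le> 1 then Ends1 i l' r' else Bis i (j - 1) l' r')"
| "step a pick x (Ends1 i l r) =
     (let d = dd i l r in if x = a (l + d) then Done (l + d) else Ends2 i l r)"
| "step a pick x (Ends2 i l r) =
     (let d = dd i l r in
      if x = a (r - d) then Done (r - d)
      else if x < a (l + d) then BS l (l + d - 1)
      else if a (r - d) < x then BS (r - d + 1) r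
      else Bis (Suc i) (2 ^ Suc i) (l + d + 1) (r - d - 1))"
| "step a pick x (BS l r) =
     (let k = (l + r) div 2 in
      if x = a k then Done k else if x < a k then BS l (k - 1) else BS (k + 1) r)"
| "step a pick x (Done k) = Done k"

definition init_state :: "nat \<Rightarrow> st" where
  "init_state n = Bis 0 1 1 n"

definition comparisons :: "(nat \<Rightarrow> 'a::linorder) \<Rightarrow> (nat \<Rightarrow> nat \<Rightarrow> nat) \<Rightarrow> nat \<Rightarrow> 'a \<Rightarrow> nat" where
  "comparisons a pick n x = (LEAST k. \<exists>j. (step a pick x ^^ k) (init_state n) = Done j)"

end

theory Submission
  imports Defs "HOL-Analysis.Harmonic_Numbers"
begin

lemma two_i: "2 * i \<le> (2::nat)^i"
proof (induction i)
  case (Suc i) then show ?case by (cases i) auto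
qed simp

lemma funpow_Suc': "(f ^^ Suc k) s = (f ^^ k) (f s)"
  by (simp only: funpow_Suc_right o_apply)

lemma funpow_add': "(f ^^ (j + k)) s = (f ^^ k) ((f ^^ j) s)"
  by (simp only: add.commute[of j k] funpow_add o_apply)

lemma done_fix: "(step a pick x ^^ m) (Done j) = Done j"
  by (induction m) auto

definition wmass :: "nat \<Rightarrow> (nat \<Rightarrow> real) \<Rightarrow> nat \<Rightarrow> nat \<Rightarrow> real" where
  "wmass n ph t D = (\<Sum>j\<in>{j\<in>{1..n}. t \<le> j + D \<and> j \<le> t + D}. ph j)"

lemma pow_sq: "(2::real)^(2^Suc i) = 2^(2^i) * 2^(2^i)"
  by (simp add: power_add[symmetric] mult_2)

context
  fixes n :: nat and a :: "nat \<Rightarrow> 'a::linorder" and ph :: "nat \<Rightarrow> real"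
    and pick :: "nat \<Rightarrow> nat \<Rightarrow> nat" and t :: nat
  assumes mono: "strict_mono_on {1..n} a"
    and php: "prob_dist n ph" and vp: "valid_pick n ph pick" and tin: "t \<in> {1..n}"
begin

lemma eqk: "k \<in> {1..n} \<Longrightarrow> (a t = a k) = (t = k)"
  using strict_mono_on_eq[OF mono] tin by blast

lemma lessk: "k \<in> {1..n} \<Longrightarrow> (a t < a k) = (t < k)"
  using strict_mono_on_less[OF mono] tin by blast

lemma bs: "1 \<le> l \<Longrightarrow> l \<le> t \<Longrightarrow> t \<le> r \<Longrightarrow> r \<le> n \<Longrightarrow> r + 1 - l \<le> 2^m
  \<Longrightarrow> \<exists>k\<le>m+1. (step a pick (a t) ^^ k) (BS l r) = Done t"
proof (induction m arbitrary: l r)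
  case 0
  then have "l = t" "r = t" by auto
  then have "step a pick (a t) (BS l r) = Done t" by (simp add: Let_def)
  then show ?case by (intro exI[of _ 1]) simp
next
  case (Suc m)
  define k0 where "k0 = (l + r) div 2"
  have k0: "k0 \<in> {1..n}" "l \<le> k0" "k0 \<le> r" using Suc.prems unfolding k0_def by auto
  have st: "step a pick (a t) (BS l r) = (if t = k0 then Done k0 else if t < k0 then BS l (k0 - 1) else BS (k0+1) r)"
    using eqk[OF k0(1)] lessk[OF k0(1)] by (simp add: Let_def k0_def)
  show ?case
  proof (cases "t = k0")
    case True
    then show ?thesis using st by (intro exI[of _ 1]) simp
  next
    case False
    note F = False
    show ?thesis
    proof (cases "t < k0")
      case True
      have "k0 - 1 + 1 - l \<le> 2^m" using Suc.prems(5) unfolding k0_def power_Suc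
        by presburger
      moreover have "t \<le> k0 - 1" "k0 - 1 \<le> n" using True k0 by auto
      ultimately obtain k where "k \<le> m + 1" "(step a pick (a t) ^^ k) (BS l (k0 - 1)) = Done t"
        using Suc.IH[of l "k0 - 1"] Suc.prems by blast
      then show ?thesis using st F True by (intro exI[of _ "Suc k"]) (auto simp del: funpow.simps simp: funpow_Suc')
    next
      case False
      have "r + 1 - (k0 + 1) \<le> 2^m" using Suc.prems(5) unfolding k0_def power_Suc
        by presburger
      moreover have "k0 + 1 \<le> t" "1 \<le> k0 + 1" using False F k0 by auto
      ultimately obtain k where "k \<le> m + 1" "(step a pick (a t) ^^ k) (BS (k0+1) r) = Done t"
        using Suc.IH[of "k0+1" r] Suc.prems by blast
      then show ?thesis using st F False by (intro exI[of _ "Suc k"]) (auto simp del: funpow.simps simp: funpow_Suc')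
    qed
  qed
qed

lemma pick_facts: "1 \<le> l \<Longrightarrow> l \<le> r \<Longrightarrow> r \<le> n \<Longrightarrow> l \<le> pick l r \<and> pick l r \<le> r
   \<and> (\<Sum>j=l..pick l r - 1. ph j) \<le> (\<Sum>j=l..r. ph j) / 2 \<and> (\<Sum>j=pick l r+1..r. ph j) \<le> (\<Sum>j=l..r. ph j) / 2"
  using vp unfolding valid_pick_def Let_def by blast

lemma bis_step: assumes "1 \<le> l" "l \<le> t" "t \<le> r" "r \<le> n"
  shows "step a pick (a t) (Bis i (Suc j) l r) = Done t \<or> (\<exists>l' r'. 1\<le>l' \<and> l'\<le>t \<and> t\<le>r' \<and> r'\<le>n \<and>
     (\<Sum>x=l'..r'. ph x) \<le> (\<Sum>x=l..r. ph x) / 2 \<and>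
     step a pick (a t) (Bis i (Suc j) l r) = (if Suc j \<le> 1 then Ends1 i l' r' else Bis i j l' r'))"
proof -
  define k0 where "k0 = pick l r"
  have P: "l \<le> k0" "k0 \<le> r" "(\<Sum>j=l..k0 - 1. ph j) \<le> (\<Sum>j=l..r. ph j) / 2" "(\<Sum>j=k0+1..r. ph j) \<le> (\<Sum>j=l..r. ph j) / 2"
    using pick_facts[of l r] assms unfolding k0_def by auto
  have k0: "k0 \<in> {1..n}" using P assms by auto
  have st: "step a pick (a t) (Bis i (Suc j) l r) = (if t = k0 then Done k0 else
      if t < k0 then (if Suc j \<le> 1 then Ends1 i l (k0 - 1) else Bis i j l (k0 - 1))
      else (if Suc j \<le> 1 then Ends1 i (k0+1) r else Bis i j (k0+1) r))"
    using eqk[OF k0] lessk[OF k0] by (simp add: Let_def k0_def)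
  show ?thesis
  proof (cases "t = k0")
    case True then show ?thesis using st by simp
  next
    case False
    show ?thesis
    proof (cases "t < k0")
      case True
      then show ?thesis using st False P assms by (intro disjI2 exI[of _ l] exI[of _ "k0 - 1"]) auto
    next
      case F2: False
      then show ?thesis using st False P assms by (intro disjI2 exI[of _ "k0+1"] exI[of _ r]) auto
    qed
  qed
qed

lemma bis: "1 \<le> l \<Longrightarrow> l \<le> t \<Longrightarrow> t \<le> r \<Longrightarrow> r \<le> n \<Longrightarrow> 1 \<le> j \<Longrightarrow>
  (\<exists>k\<le>j. (step a pick (a t) ^^ k) (Bis i j l r) = Done t) \<or>
  (\<exists>l' r'. (step a pick (a t) ^^ j) (Bis i j l r) = Ends1 i l' r' \<and> 1 \<le> l' \<and> l' \<le> t \<and> t \<le> r' \<and> r' \<le> n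
      \<and> (\<Sum>x=l'..r'. ph x) \<le> (\<Sum>x=l..r. ph x) / 2^j)"
proof (induction j arbitrary: l r)
  case 0 then show ?case by simp
next
  case (Suc j)
  from bis_step[OF Suc.prems(1-4), of i j] show ?case
  proof
    assume "step a pick (a t) (Bis i (Suc j) l r) = Done t"
    then show ?thesis by (intro disjI1 exI[of _ 1]) simp
  next
    assume "\<exists>l' r'. 1\<le>l' \<and> l'\<le>t \<and> t\<le>r' \<and> r'\<le>n \<and>
     (\<Sum>x=l'..r'. ph x) \<le> (\<Sum>x=l..r. ph x) / 2 \<and>
     step a pick (a t) (Bis i (Suc j) l r) = (if Suc j \<le> 1 then Ends1 i l' r' else Bis i j l' r')"
    then obtain l' r' where L: "1\<le>l'" "l'\<le>t" "t\<le>r'" "r'\<le>n"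
      "(\<Sum>x=l'..r'. ph x) \<le> (\<Sum>x=l..r. ph x) / 2"
      "step a pick (a t) (Bis i (Suc j) l r) = (if Suc j \<le> 1 then Ends1 i l' r' else Bis i j l' r')" by blast
    show ?thesis
    proof (cases "j = 0")
      case True
      then show ?thesis using L by (intro disjI2 exI[of _ l'] exI[of _ r']) simp
    next
      case False
      then have stp: "step a pick (a t) (Bis i (Suc j) l r) = Bis i j l' r'" using L by simp
      have j1: "1 \<le> j" using False by simp
      from Suc.IH[OF L(1-4) j1] show ?thesis
      proof (elim disjE exE conjE)
        fix k assume "k \<le> j" "(step a pick (a t) ^^ k) (Bis i j l' r') = Done t"
        then show ?thesis using stp
          by (intro disjI1 exI[of _ "Suc k"]) (auto simp del: funpow.simps simp: funpow_Suc')
      next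
        fix l2 r2 assume H: "(step a pick (a t) ^^ j) (Bis i j l' r') = Ends1 i l2 r2" "1 \<le> l2" "l2 \<le> t" "t \<le> r2" "r2 \<le> n"
          "(\<Sum>x=l2..r2. ph x) \<le> (\<Sum>x=l'..r'. ph x) / 2^j"
        have "(\<Sum>x=l2..r2. ph x) \<le> (\<Sum>x=l..r. ph x) / 2^Suc j"
          using H(6) L(5) by (simp add: field_simps) 
        then show ?thesis using H stp
          by (intro disjI2 exI[of _ l2] exI[of _ r2]) (auto simp del: funpow.simps simp: funpow_Suc')
      qed
    qed
  qed
qed

lemma ends: assumes "1 \<le> l" "l \<le> t" "t \<le> r" "r \<le> n"
  shows "(\<exists>k \<le> 2^i + 3. (step a pick (a t) ^^ k) (Ends1 i l r) = Done t) \<or>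
   ((step a pick (a t) ^^ 2) (Ends1 i l r) = Bis (Suc i) (2^Suc i) (l + 2^2^i + 1) (r - 2^2^i - 1)
     \<and> l + 2^2^i < t \<and> t + 2^2^i < r)"
proof -
  define d where "d = dd i l r"
  have d: "d \<le> 2^2^i" "d \<le> r - l" using d_def dd_def by auto
  have k1: "l + d \<in> {1..n}" "r - d \<in> {1..n}" using d assms by auto
  have s1: "step a pick (a t) (Ends1 i l r) = (if t = l + d then Done t else Ends2 i l r)"
    using eqk[OF k1(1)] by (auto simp add: Let_def d_def)
  have s2: "step a pick (a t) (Ends2 i l r) = (if t = r - d then Done t else if t < l + d then BS l (l+d-1)
     else if r - d < t then BS (r-d+1) r else Bis (Suc i) (2 ^ Suc i) (l + d + 1) (r - d - 1))"
    using eqk[OF k1(2)] lessk[OF k1(1)] lessk[OF k1(2)] eqk[OF k1(1)]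
    by (auto simp add: Let_def d_def)
  show ?thesis
  proof (cases "t = l + d")
    case True
    then show ?thesis using s1 by (intro disjI1 exI[of _ 1]) auto
  next
    case F1: False
    have e1: "(step a pick (a t) ^^ 1) (Ends1 i l r) = Ends2 i l r" using s1 F1 by simp
    have e2: "(step a pick (a t) ^^ Suc (Suc k)) (Ends1 i l r) = (step a pick (a t) ^^ k) (step a pick (a t) (Ends2 i l r))" for k
      using e1 by (simp del: funpow.simps add: funpow_Suc')
    show ?thesis
    proof (cases "t = r - d")
      case True
      then show ?thesis using e2[of 0] s2 by (intro disjI1 exI[of _ 2]) (auto simp: numeral_2_eq_2)
    next
      case F2: False
      show ?thesis
      proof (cases "t < l + d")
        case True
        have "l + d - 1 + 1 - l \<le> 2^2^i" using d True assms by linarith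
        moreover have "t \<le> l + d - 1" "l + d - 1 \<le> n" using True k1 by auto
        ultimately obtain k where "k \<le> 2^i + 1" "(step a pick (a t) ^^ k) (BS l (l+d-1)) = Done t"
          using bs[of l "l+d-1" "2^i"] assms by blast
        then show ?thesis using e2[of k] s2 F2 True by (intro disjI1 exI[of _ "Suc (Suc k)"]) auto
      next
        case F3: False
        show ?thesis
        proof (cases "r - d < t")
          case True
          have "r + 1 - (r - d + 1) \<le> 2^2^i" using d by simp
          moreover have "r - d + 1 \<le> t" "1 \<le> r - d + 1" using True k1 by auto
          ultimately obtain k where "k \<le> 2^i + 1" "(step a pick (a t) ^^ k) (BS (r-d+1) r) = Done t"
            using bs[of "r-d+1" r "2^i"] assms by blast
          then show ?thesis using e2[of k] s2 F2 F3 True by (intro disjI1 exI[of _ "Suc (Suc k)"]) auto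
        next
          case F4: False
          have lt: "l + d < t" "t < r - d" using F1 F2 F3 F4 by auto
          then have "d = 2^2^i" using d_def dd_def by auto
          then show ?thesis using e2[of 0] s2 F2 F3 F4 lt by (intro disjI2) (auto simp: numeral_2_eq_2)
        qed
      qed
    qed
  qed
qed

lemma phnn: "j \<in> {1..n} \<Longrightarrow> 0 \<le> ph j" using php unfolding prob_dist_def by blast

lemma mass_mono: "1 \<le> l \<Longrightarrow> r \<le> n \<Longrightarrow> A \<subseteq> {l..r} \<Longrightarrow> (\<Sum>j\<in>A. ph j) \<le> (\<Sum>j=l..r. ph j)"
  by (rule sum_mono2) (auto intro: phnn)

lemma one_iter: assumes "1 \<le> l" "l \<le> t" "t \<le> r" "r \<le> n" "(\<Sum>x=l..r. ph x) \<le> 2/2^(2^i)"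
  shows "(\<exists>k \<le> 2*2^i + 3. (step a pick (a t) ^^ k) (Bis i (2^i) l r) = Done t) \<or>
    (\<exists>l' r'. (step a pick (a t) ^^ (2^i+2)) (Bis i (2^i) l r) = Bis (Suc i) (2^Suc i) l' r' \<and>
       1 \<le> l' \<and> l' \<le> t \<and> t \<le> r' \<and> r' \<le> n \<and> (\<Sum>x=l'..r'. ph x) \<le> 2/2^(2^Suc i)
       \<and> wmass n ph t (2^2^i) \<le> 2/2^(2^Suc i))"
proof -
  have j1: "1 \<le> (2::nat)^i" by simp
  from bis[OF assms(1-4) j1, of i] show ?thesis
  proof (elim disjE exE conjE)
    fix k assume "k \<le> 2^i" "(step a pick (a t) ^^ k) (Bis i (2^i) l r) = Done t"
    then show ?thesis by (intro disjI1 exI[of _ k]) auto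
  next
    fix l' r' assume H: "(step a pick (a t) ^^ 2^i) (Bis i (2^i) l r) = Ends1 i l' r'"
      "1 \<le> l'" "l' \<le> t" "t \<le> r'" "r' \<le> n" "(\<Sum>x=l'..r'. ph x) \<le> (\<Sum>x=l..r. ph x) / 2^(2^i)"
    have M': "(\<Sum>x=l'..r'. ph x) \<le> 2/2^(2^Suc i)"
    proof -
      have "(\<Sum>x=l..r. ph x) / 2^(2^i) \<le> (2/2^(2^i)) / 2^(2^i)"
        using assms(5) by (rule divide_right_mono) simp
      then show ?thesis using H(6) pow_sq[of i] by simp
    qed
    from ends[OF H(2-5), of i] show ?thesis
    proof (elim disjE conjE exE)
      fix k assume "k \<le> 2^i + 3" "(step a pick (a t) ^^ k) (Ends1 i l' r') = Done t"
      then show ?thesis using H(1) by (intro disjI1 exI[of _ "2^i + k"]) (auto simp: funpow_add')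
    next
      assume E: "(step a pick (a t) ^^ 2) (Ends1 i l' r') = Bis (Suc i) (2^Suc i) (l' + 2^2^i + 1) (r' - 2^2^i - 1)"
        "l' + 2^2^i < t" "t + 2^2^i < r'"
      have W: "wmass n ph t (2^2^i) \<le> (\<Sum>x=l'..r'. ph x)"
        unfolding wmass_def using E(2,3) H(2,5) by (intro mass_mono) auto
      have M2: "(\<Sum>x=l' + 2^2^i + 1..r' - 2^2^i - 1. ph x) \<le> (\<Sum>x=l'..r'. ph x)"
        using H(2,5) by (intro mass_mono) auto
      have st: "(step a pick (a t) ^^ (2^i + 2)) (Bis i (2^i) l r) = Bis (Suc i) (2^Suc i) (l' + 2^2^i + 1) (r' - 2^2^i - 1)"
        using H(1) E(1) by (simp only: funpow_add')
      have b: "1 \<le> l' + 2^2^i + 1" "l' + 2^2^i + 1 \<le> t" "t \<le> r' - 2^2^i - 1" "r' - 2^2^i - 1 \<le> n"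
        using E H by auto
      have M'': "(\<Sum>x=l' + 2^2^i + 1..r' - 2^2^i - 1. ph x) \<le> 2/2^(2^Suc i)" using M2 M' by linarith
      have W': "wmass n ph t (2^2^i) \<le> 2/2^(2^Suc i)" using W M' by linarith
      show ?thesis using st b M'' W' by blast
    qed
  qed
qed


lemma iter: assumes I: "wmass n ph t (2^2^I) > 2/2^(2^Suc I)"
  shows "m + i = I \<Longrightarrow> 1 \<le> l \<Longrightarrow> l \<le> t \<Longrightarrow> t \<le> r \<Longrightarrow> r \<le> n \<Longrightarrow> (\<Sum>x=l..r. ph x) \<le> 2/2^(2^i)
   \<Longrightarrow> \<exists>k. k + (2^i - 1 + 2*i) \<le> 3*2^I + 2*I + 2 \<and> (step a pick (a t) ^^ k) (Bis i (2^i) l r) = Done t"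
proof (induction m arbitrary: i l r)
  case 0
  from one_iter[OF 0(2-6)] show ?case
  proof (elim disjE exE conjE)
    fix k assume "k \<le> 2*2^i + 3" "(step a pick (a t) ^^ k) (Bis i (2^i) l r) = Done t"
    moreover have iI: "i = I" using 0(1) by simp
    moreover have P: "(1::nat) \<le> 2^I" by simp
    ultimately have kk: "k \<le> 2*2^I + 3" by simp
    with P have "k + (2^I - 1 + 2*I) \<le> 3*2^I + 2*I + 2" by linarith
    then show ?thesis using \<open>(step a pick (a t) ^^ k) (Bis i (2^i) l r) = Done t\<close> iI by blast
  next
    fix l' r' assume "wmass n ph t (2^2^i) \<le> 2/2^(2^Suc i)"
    then show ?thesis using I 0(1) by simp
  qed
next
  case (Suc m)
  have iI: "i \<le> I" using Suc.prems(1) by simp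
  have pI: "(2::nat)^i \<le> 2^I" using iI by (simp add: power_increasing)
  from one_iter[OF Suc.prems(2-6)] show ?case
  proof (elim disjE exE conjE)
    fix k assume "k \<le> 2*2^i + 3" "(step a pick (a t) ^^ k) (Bis i (2^i) l r) = Done t"
    moreover have "(1::nat) \<le> 2^i" by simp
    ultimately have "k + (2^i - 1 + 2*i) \<le> 3*2^I + 2*I + 2" using iI pI by linarith
    then show ?thesis using \<open>(step a pick (a t) ^^ k) (Bis i (2^i) l r) = Done t\<close> by blast
  next
    fix l' r' assume H: "(step a pick (a t) ^^ (2^i+2)) (Bis i (2^i) l r) = Bis (Suc i) (2^Suc i) l' r'"
      "1 \<le> l'" "l' \<le> t" "t \<le> r'" "r' \<le> n" "(\<Sum>x=l'..r'. ph x) \<le> 2/2^(2^Suc i)"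
    have "m + Suc i = I" using Suc.prems(1) by simp
    from Suc.IH[OF this H(2-6)] obtain k where
      K: "k + (2^Suc i - 1 + 2 * Suc i) \<le> 3*2^I + 2*I + 2" "(step a pick (a t) ^^ k) (Bis (Suc i) (2^Suc i) l' r') = Done t"
      by blast
    have "(step a pick (a t) ^^ (2^i + 2 + k)) (Bis i (2^i) l r) = Done t"
      using H(1) K(2) by (simp only: funpow_add')
    moreover have "(2^i + 2 + k) + (2^i - 1 + 2*i) \<le> 3*2^I + 2*I + 2"
    proof -
      have "(1::nat) \<le> 2^i" by simp
      then show ?thesis using K(1) unfolding power_Suc mult_Suc_right by arith
    qed
    ultimately show ?thesis by blast
  qed
qed

lemma cost: assumes I: "wmass n ph t (2^2^I) > 2/2^(2^Suc I)"
  shows "(step a pick (a t) ^^ comparisons a pick n (a t)) (init_state n) = Done t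
     \<and> comparisons a pick n (a t) \<le> 3*2^I + 2*I + 2"
proof -
  have s1: "(\<Sum>x=1..n. ph x) \<le> 2/2^(2^0)" using php unfolding prob_dist_def by simp
  have h: "I + 0 = I" "1 \<le> (1::nat)" "1 \<le> t" "t \<le> n" "n \<le> n" using tin by auto
  from iter[OF I h s1] obtain k where
    K0: "k + (2^0 - 1 + 2*0) \<le> 3*2^I + 2*I + 2" "(step a pick (a t) ^^ k) (Bis 0 (2^0) 1 n) = Done t" by blast
  have K: "k \<le> 3*2^I + 2*I + 2" "(step a pick (a t) ^^ k) (Bis 0 (2^0) 1 n) = Done t"
    using K0 by simp_all
  have K2: "(step a pick (a t) ^^ k) (init_state n) = Done t" using K(2) by (simp add: init_state_def)
  define L where "L = comparisons a pick n (a t)"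
  have L: "L = (LEAST k. \<exists>j. (step a pick (a t) ^^ k) (init_state n) = Done j)"
    unfolding L_def comparisons_def by simp
  have Lk: "L \<le> k" unfolding L using K2 by (intro Least_le) blast
  have "\<exists>j. (step a pick (a t) ^^ L) (init_state n) = Done j"
    unfolding L by (rule LeastI_ex) (use K2 in blast)
  then obtain j where Lj: "(step a pick (a t) ^^ L) (init_state n) = Done j" by blast
  have "(step a pick (a t) ^^ (L + (k - L))) (init_state n) = (step a pick (a t) ^^ (k - L)) (Done j)"
    using Lj by (simp only: funpow_add')
  also have "\<dots> = Done j" by (rule done_fix)
  finally have "(step a pick (a t) ^^ k) (init_state n) = Done j" using Lk by simp
  then have "j = t" using K2 by simp
  then show ?thesis using Lj Lk K(1) unfolding L_def by simp
qed

lemma wmass_all: assumes "n \<le> D" shows "wmass n ph t D = 1"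
proof -
  have "{j\<in>{1..n}. t \<le> j + D \<and> j \<le> t + D} = {1..n}" using assms tin by auto
  then show ?thesis using php unfolding wmass_def prob_dist_def by simp
qed

lemma istar_ex: "\<exists>I. wmass n ph t (2^2^I) > 2/2^(2^Suc I)"
proof -
  have "n < 2^n" by (rule less_exp)
  also have "(2::nat)^n \<le> 2^2^n" by (intro power_increasing) (auto intro: less_imp_le less_exp)
  finally have w: "wmass n ph t (2^2^n) = 1" by (intro wmass_all) simp
  have "(4::real) \<le> 2^(2^Suc n)"
  proof -
    have "(2::nat) \<le> 2^Suc n" by simp
    then have "(2::real)^2 \<le> 2^(2^Suc n)" by (intro power_increasing) auto
    then show ?thesis by simp
  qed
  then have "2/2^(2^Suc n) < (1::real)" by (simp add: field_simps)
  then show ?thesis using w by (intro exI[of _ n]) simp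
qed

end

lemma transport:
  assumes g: "coupling n p ph g" and t: "t \<in> {1..n}"
  shows "(p t - wmass n ph t D) * real D \<le> (\<Sum>y=1..n. g t y * \<bar>real t - real y\<bar>)"
proof -
  define W where "W = {j\<in>{1..n}. t \<le> j + D \<and> j \<le> t + D}"
  have WS: "W \<subseteq> {1..n}" unfolding W_def by auto
  have gnn: "\<And>x y. x \<in> {1..n} \<Longrightarrow> y \<in> {1..n} \<Longrightarrow> 0 \<le> g x y" using g unfolding coupling_def by blast
  have rows: "(\<Sum>y=1..n. g t y) = p t" using g t unfolding coupling_def by blast
  have cols: "\<And>y. y \<in> {1..n} \<Longrightarrow> (\<Sum>x=1..n. g x y) = ph y" using g unfolding coupling_def by blast
  have 1: "(\<Sum>y\<in>{1..n}-W. g t y * \<bar>real t - real y\<bar>) \<le> (\<Sum>y=1..n. g t y * \<bar>real t - real y\<bar>)"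
    by (rule sum_mono2) (use gnn t in auto)
  have 2: "(\<Sum>y\<in>{1..n}-W. g t y * real D) \<le> (\<Sum>y\<in>{1..n}-W. g t y * \<bar>real t - real y\<bar>)"
  proof (rule sum_mono)
    fix y assume y: "y \<in> {1..n}-W"
    then have "real D \<le> \<bar>real t - real y\<bar>" unfolding W_def by auto
    then show "g t y * real D \<le> g t y * \<bar>real t - real y\<bar>"
      using gnn[of t y] t y by (intro mult_left_mono) auto
  qed
  have 3: "(\<Sum>y\<in>{1..n}-W. g t y) = p t - (\<Sum>y\<in>W. g t y)"
    using sum.subset_diff[OF WS, of "g t"] rows by simp
  have 4: "(\<Sum>y\<in>W. g t y) \<le> wmass n ph t D"
    unfolding wmass_def W_def[symmetric]
  proof (rule sum_mono)
    fix y assume y: "y \<in> W"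
    then have yn: "y \<in> {1..n}" using WS by auto
    have "g t y \<le> (\<Sum>x=1..n. g x y)"
      by (rule member_le_sum) (use t yn gnn in auto)
    then show "g t y \<le> ph y" using cols[OF yn] by simp
  qed
  have "(p t - wmass n ph t D) * real D \<le> (p t - (\<Sum>y\<in>W. g t y)) * real D"
    using 4 by (intro mult_right_mono) auto
  also have "\<dots> = (\<Sum>y\<in>{1..n}-W. g t y * real D)" by (simp only: 3[symmetric] sum_distrib_right)
  finally show ?thesis using 1 2 by linarith
qed

lemma emd_lower:
  assumes p: "prob_dist n p" and ph: "prob_dist n ph" and BS: "B \<subseteq> {1..n}"
    and q: "\<And>t. t \<in> B \<Longrightarrow> wmass n ph t (D t) \<le> p t / 2"
  shows "(\<Sum>t\<in>B. p t * real (D t) / 2) \<le> emd n p ph"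
proof -
  define S where "S = {c. \<exists>g. coupling n p ph g \<and>
       c = (\<Sum>x=1..n. \<Sum>y=1..n. g x y * \<bar>real x - real y\<bar>)}"
  have sp: "(\<Sum>i=1..n. p i) = 1" "(\<Sum>i=1..n. ph i) = 1" using p ph unfolding prob_dist_def by auto
  have "coupling n p ph (\<lambda>x y. p x * ph y)"
    unfolding coupling_def
  proof (intro conjI ballI)
    fix x y assume "x \<in> {1..n}" "y \<in> {1..n}"
    then show "0 \<le> p x * ph y" using p ph unfolding prob_dist_def by auto
  next
    fix x show "(\<Sum>y=1..n. p x * ph y) = p x" using sp by (simp add: sum_distrib_left[symmetric])
  next
    fix y show "(\<Sum>x=1..n. p x * ph y) = ph y" using sp by (simp add: sum_distrib_right[symmetric])
  qed
  then have ne: "S \<noteq> {}" unfolding S_def by blast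
  have "(\<Sum>t\<in>B. p t * real (D t) / 2) \<le> c" if c: "c \<in> S" for c
  proof -
    obtain g where g: "coupling n p ph g" and cg: "c = (\<Sum>x=1..n. \<Sum>y=1..n. g x y * \<bar>real x - real y\<bar>)"
      using c unfolding S_def by blast
    have gnn: "\<And>x y. x \<in> {1..n} \<Longrightarrow> y \<in> {1..n} \<Longrightarrow> 0 \<le> g x y" using g unfolding coupling_def by blast
    have "(\<Sum>t\<in>B. p t * real (D t) / 2) \<le> (\<Sum>t\<in>B. (p t - wmass n ph t (D t)) * real (D t))"
    proof (rule sum_mono)
      fix t assume t: "t \<in> B"
      have "p t / 2 \<le> p t - wmass n ph t (D t)" using q[OF t] by simp
      then show "p t * real (D t) / 2 \<le> (p t - wmass n ph t (D t)) * real (D t)"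
        using mult_right_mono[of "p t / 2" _ "real (D t)"] by simp
    qed
    also have "\<dots> \<le> (\<Sum>t\<in>B. \<Sum>y=1..n. g t y * \<bar>real t - real y\<bar>)"
      by (rule sum_mono) (use transport[OF g] BS in auto)
    also have "\<dots> \<le> c" unfolding cg
      by (rule sum_mono2) (use BS gnn in \<open>auto intro!: sum_nonneg\<close>)
    finally show ?thesis .
  qed
  then show ?thesis unfolding emd_def S_def[symmetric] by (intro cInf_greatest ne) auto
qed

lemma xlog: assumes "0 < x" "x \<le> (1::real)" shows "- (x * log 2 x) \<le> 3/4"
proof -
  have lny: "ln y \<le> y / 2" if "y > 0" for y :: real
  proof -
    have "ln (y/2) \<le> y/2 - 1" using that by (intro ln_le_minus_one) auto
    moreover have "ln (y/2) = ln y - ln 2" using that by (simp add: ln_div)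
    ultimately show ?thesis using ln_2_less_1 by linarith
  qed
  have "ln (1/x) \<le> (1/x)/2" using lny[of "1/x"] assms by simp
  then have "x * ln (1/x) \<le> x * ((1/x)/2)" using assms by (intro mult_left_mono) auto
  then have a: "- (x * ln x) \<le> 1/2" using assms by (simp add: ln_div)
  have "- (x * log 2 x) = - (x * ln x) / ln 2" by (simp add: log_def)
  also have "\<dots> \<le> (1/2) / ln 2" using a by (intro divide_right_mono) auto
  also have "\<dots> \<le> (1/2) / (2/3)" using ln2_ge_two_thirds by (intro divide_left_mono) auto
  finally show ?thesis by simp
qed

lemma tangent:
  assumes fin: "finite B" and ne: "B \<noteq> {}" and pp: "\<And>t. t \<in> B \<Longrightarrow> 0 < p t"
    and Dp: "\<And>t. t \<in> B \<Longrightarrow> 0 < (D t::real)" and sumD: "(\<Sum>t\<in>B. p t * D t) \<le> 2 * eta"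
  shows "(\<Sum>t\<in>B. p t * log 2 (D t)) \<le> (\<Sum>t\<in>B. p t) * log 2 (2 * eta / (\<Sum>t\<in>B. p t))"
proof -
  define P where "P = (\<Sum>t\<in>B. p t)"
  have P0: "0 < P" unfolding P_def using fin ne pp by (intro sum_pos) auto
  have "0 < (\<Sum>t\<in>B. p t * D t)" using fin ne pp Dp by (intro sum_pos) auto
  then have eta0: "0 < eta" using sumD by linarith
  define Y where "Y = 2 * eta / P"
  have Y0: "0 < Y" unfolding Y_def using P0 eta0 by simp
  have each: "p t * log 2 (D t) \<le> p t * log 2 Y + (p t * D t / Y - p t) / ln 2" if t: "t \<in> B" for t
  proof -
    have "ln (D t / Y) \<le> D t / Y - 1" using Dp[OF t] Y0 by (intro ln_le_minus_one) auto
    moreover have "ln (D t / Y) = ln (D t) - ln Y" using Dp[OF t] Y0 by (simp add: ln_div)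
    ultimately have "ln (D t) \<le> ln Y + (D t / Y - 1)" by linarith
    then have "ln (D t) / ln 2 \<le> (ln Y + (D t / Y - 1)) / ln 2" by (rule divide_right_mono) simp
    then have "log 2 (D t) \<le> log 2 Y + (D t / Y - 1) / ln 2" by (simp add: log_def add_divide_distrib)
    then have "p t * log 2 (D t) \<le> p t * (log 2 Y + (D t / Y - 1) / ln 2)"
      by (rule mult_left_mono) (use pp[OF t] in auto)
    also have "\<dots> = p t * log 2 Y + (p t * D t / Y - p t) / ln 2" by (simp add: algebra_simps diff_divide_distrib)
    finally show ?thesis .
  qed
  have "(\<Sum>t\<in>B. p t * log 2 (D t)) \<le> (\<Sum>t\<in>B. p t * log 2 Y + (p t * D t / Y - p t) / ln 2)"
    by (rule sum_mono) (rule each)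
  also have "\<dots> = (\<Sum>t\<in>B. p t) * log 2 Y + ((\<Sum>t\<in>B. p t * D t / Y) - (\<Sum>t\<in>B. p t)) / ln 2"
    by (simp only: sum.distrib sum_distrib_right sum_divide_distrib[symmetric] sum_subtractf)
  also have "(\<Sum>t\<in>B. p t * D t / Y) = (\<Sum>t\<in>B. p t * D t) / Y" by (simp only: sum_divide_distrib)
  also have "(\<Sum>t\<in>B. p t * D t) / Y \<le> P"
  proof -
    have "(\<Sum>t\<in>B. p t * D t) / Y \<le> 2 * eta / Y" using sumD Y0 by (intro divide_right_mono) auto
    also have "\<dots> = P" unfolding Y_def using P0 eta0 by simp
    finally show ?thesis .
  qed
  then have "(\<Sum>t\<in>B. p t) * log 2 Y + ((\<Sum>t\<in>B. p t * D t) / Y - (\<Sum>t\<in>B. p t)) / ln 2 \<le> P * log 2 Y"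
    unfolding P_def[symmetric] by (simp add: divide_nonpos_pos)
  finally show ?thesis unfolding P_def Y_def by simp
qed


lemma good_bound: assumes "0 < x" "x \<le> (1::real)" "k = 0 \<or> x \<le> 4 / 2^(2^k)"
  shows "x * 2^k \<le> 2 * x - x * log 2 x"
proof -
  have lx: "log 2 x \<le> 0" using assms by simp
  have "(2::real)^k \<le> 2 - log 2 x"
  proof (cases "k = 0")
    case True then show ?thesis using lx by simp
  next
    case False
    then have x4: "x \<le> 4 / 2^(2^k)" using assms by simp
    have "log 2 x \<le> log 2 (4 / 2^(2^k))" using x4 assms(1) by (intro log_mono) auto
    also have "\<dots> = log 2 4 - log 2 (2^(2^k))" by (simp add: log_divide_pos)
    also have "log 2 (4::real) = 2"
      using log_pow_cancel[of "2::real" 2] by simp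
    also have "log 2 ((2::real)^(2^k)) = real (2^k)" by simp
    finally show ?thesis by simp
  qed
  then have "x * 2^k \<le> x * (2 - log 2 x)" using assms by (intro mult_left_mono) auto
  then show ?thesis by (simp add: algebra_simps)
qed

theorem theorem3p1:
  fixes n :: nat and a :: "nat \<Rightarrow> 'a::linorder" and p ph :: "nat \<Rightarrow> real"
    and pick :: "nat \<Rightarrow> nat \<Rightarrow> nat"
  assumes "n \<ge> 1"
    and "strict_mono_on {1..n} a"
    and "prob_dist n p"
    and "prob_dist n ph"
    and "valid_pick n ph pick"
  shows "(\<forall>i\<in>{1..n}. \<exists>k. (step a pick (a i) ^^ k) (init_state n) = Done i)
    \<and> (\<Sum>i=1..n. p i * real (comparisons a pick n (a i)))
        \<le> 4 * entropy n p + 8 * eta_term (emd n p ph) + 8"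
proof -
  note mono = assms(2) and pd = assms(3) and phd = assms(4) and vp = assms(5)
  have pnn: "\<And>t. t \<in> {1..n} \<Longrightarrow> 0 \<le> p t" using pd unfolding prob_dist_def by blast
  have psum: "(\<Sum>t=1..n. p t) = 1" using pd unfolding prob_dist_def by blast
  have ple1: "p t \<le> 1" if t: "t \<in> {1..n}" for t
  proof -
    have "p t \<le> (\<Sum>t=1..n. p t)" by (rule member_le_sum) (use t pnn in auto)
    then show ?thesis using psum by simp
  qed
  define Is where "Is t = (LEAST I. 2/2^(2^Suc I) < wmass n ph t (2^2^I))" for t
  have IsP: "2/2^(2^Suc (Is t)) < wmass n ph t (2^2^(Is t))" if t: "t \<in> {1..n}" for t
    unfolding Is_def by (rule LeastI_ex) (rule istar_ex[OF mono phd vp t])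
  have IsL: "wmass n ph t (2^2^(Is t - 1)) \<le> 2/2^(2^(Is t))" if t: "t \<in> {1..n}" and I1: "1 \<le> Is t" for t
  proof -
    have "\<not> (2/2^(2^Suc (Is t - 1)) < wmass n ph t (2^2^(Is t - 1)))"
      unfolding Is_def by (rule not_less_Least) (use I1 in \<open>simp add: Is_def\<close>)
    moreover have "Suc (Is t - 1) = Is t" using I1 by simp
    ultimately show ?thesis by simp
  qed
  define C where "C t = comparisons a pick n (a t)" for t
  have Cf: "(step a pick (a t) ^^ C t) (init_state n) = Done t \<and> C t \<le> 3*2^(Is t) + 2*(Is t) + 2"
    if t: "t \<in> {1..n}" for t
    unfolding C_def by (rule cost[OF mono phd vp t IsP[OF t]])
  have part1: "\<forall>i\<in>{1..n}. \<exists>k. (step a pick (a i) ^^ k) (init_state n) = Done i"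
    using Cf by blast
  define ent where "ent t = (if p t = 0 then 0 else p t * log 2 (p t))" for t
  define H where "H = entropy n p"
  have Hd: "H = - (\<Sum>t=1..n. ent t)" unfolding H_def entropy_def ent_def by simp
  have E1: "(\<Sum>t=1..n. p t * real (C t)) \<le> (\<Sum>t=1..n. p t * (4 * 2^(Is t) + 2))"
  proof (rule sum_mono)
    fix t assume t: "t \<in> {1..n}"
    have "C t \<le> 4 * 2^(Is t) + 2" using Cf[OF t] two_i[of "Is t"] by linarith
    then have "real (C t) \<le> real (4 * 2^(Is t) + 2)" by (simp only: of_nat_le_iff)
    then have "real (C t) \<le> 4 * 2^(Is t) + 2" by simp
    then show "p t * real (C t) \<le> p t * (4 * 2^(Is t) + 2)" using pnn[OF t] by (intro mult_left_mono) auto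
  qed
  also have "\<dots> = 4 * (\<Sum>t=1..n. p t * 2^(Is t)) + 2"
    using psum by (simp add: algebra_simps sum.distrib sum_distrib_left sum_distrib_right[symmetric])
  finally have E: "(\<Sum>t=1..n. p t * real (C t)) \<le> 4 * (\<Sum>t=1..n. p t * 2^(Is t)) + 2" .
  define B where "B = {t\<in>{1..n}. 1 \<le> Is t \<and> 4 / 2^(2^(Is t)) < p t}"
  define G where "G = {1..n} - B"
  have BS: "B \<subseteq> {1..n}" unfolding B_def by auto
  have finB: "finite B" using BS finite_subset by blast
  have spl: "\<And>f. (\<Sum>t=1..n. f t) = (\<Sum>t\<in>G. f t) + (\<Sum>t\<in>B. f t)"
    unfolding G_def using sum.subset_diff[OF BS] by simp
  have good: "(\<Sum>t\<in>G. p t * 2^(Is t)) \<le> (\<Sum>t\<in>G. 2 * p t - ent t)"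
  proof (rule sum_mono)
    fix t assume tG: "t \<in> G"
    then have t: "t \<in> {1..n}" and nb: "Is t = 0 \<or> p t \<le> 4 / 2^(2^(Is t))"
      unfolding G_def B_def by auto
    show "p t * 2^(Is t) \<le> 2 * p t - ent t"
    proof (cases "p t = 0")
      case True then show ?thesis by (simp add: ent_def)
    next
      case False
      then have "0 < p t" using pnn[OF t] by simp
      then show ?thesis using good_bound[OF _ ple1[OF t] nb] False by (simp add: ent_def)
    qed
  qed
  have entB: "(\<Sum>t\<in>B. ent t) \<le> 0"
  proof (rule sum_nonpos)
    fix t assume "t \<in> B"
    then have t: "t \<in> {1..n}" using BS by auto
    show "ent t \<le> 0"
    proof (cases "p t = 0")
      case False
      then have "0 < p t" using pnn[OF t] by simp
      then have "log 2 (p t) \<le> 0" using ple1[OF t] by simp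
      then show ?thesis using pnn[OF t] False by (simp add: ent_def mult_nonneg_nonpos)
    qed (simp add: ent_def)
  qed
  define PB where "PB = (\<Sum>t\<in>B. p t)"
  have PG: "(\<Sum>t\<in>G. p t) = 1 - PB" using spl[of p] psum unfolding PB_def by simp
  have Gb: "(\<Sum>t\<in>G. p t * 2^(Is t)) \<le> 2 * (1 - PB) + H"
  proof -
    have "(\<Sum>t\<in>G. 2 * p t - ent t) = 2 * (1 - PB) - (\<Sum>t\<in>G. ent t)"
      using PG by (simp add: sum_subtractf sum_distrib_left[symmetric])
    moreover have "H = - (\<Sum>t\<in>G. ent t) - (\<Sum>t\<in>B. ent t)" using Hd spl[of ent] by simp
    ultimately show ?thesis using good entB by linarith
  qed
  have etaT: "1 \<le> eta_term (emd n p ph)" unfolding eta_term_def by simp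
  show ?thesis
  proof (cases "B = {}")
    case True
    then have "(\<Sum>t=1..n. p t * 2^(Is t)) \<le> 2 + H" using Gb spl[of "\<lambda>t. p t * 2^(Is t)"] PB_def by simp
    then have "(\<Sum>t=1..n. p t * real (C t)) \<le> 4 * entropy n p + 8 * eta_term (emd n p ph) + 8"
      using E etaT unfolding H_def by linarith
    then show ?thesis using part1 unfolding C_def by blast
  next
    case False
    define eta where "eta = emd n p ph"
    define D where "D t = (2::nat)^2^(Is t - 1)" for t
    have Bp: "0 < p t" if "t \<in> B" for t
    proof -
      have "0 < (4::real) / 2^(2^(Is t))" by simp
      moreover have "4 / 2^(2^(Is t)) < p t" using that unfolding B_def by auto
      ultimately show ?thesis by linarith
    qed
    have qB: "wmass n ph t (D t) \<le> p t / 2" if tB: "t \<in> B" for t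
    proof -
      have t: "t \<in> {1..n}" and I1: "1 \<le> Is t" and pb: "4 / 2^(2^(Is t)) < p t"
        using tB unfolding B_def by auto
      have "wmass n ph t (D t) \<le> 2/2^(2^(Is t))" unfolding D_def by (rule IsL[OF t I1])
      also have "\<dots> = (4 / 2^(2^(Is t))) / 2" by simp
      also have "\<dots> \<le> p t / 2" using pb by simp
      finally show ?thesis .
    qed
    have low: "(\<Sum>t\<in>B. p t * real (D t) / 2) \<le> eta"
      unfolding eta_def by (rule emd_lower[OF pd phd BS qB])
    have pos: "0 < (\<Sum>t\<in>B. p t * real (D t) / 2)"
      using finB False Bp by (intro sum_pos) (auto simp: D_def)
    have eta0: "0 < eta" using low pos by linarith
    have sumD: "(\<Sum>t\<in>B. p t * real (D t)) \<le> 2 * eta"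
      using low by (simp add: sum_divide_distrib[symmetric])
    have tg: "(\<Sum>t\<in>B. p t * log 2 (real (D t))) \<le> PB * log 2 (2 * eta / PB)"
      unfolding PB_def by (rule tangent[OF finB False Bp _ sumD]) (auto simp add: D_def)
    have PB0: "0 < PB" unfolding PB_def using finB False Bp by (intro sum_pos) auto
    have PB1: "PB \<le> 1"
    proof -
      have "0 \<le> (\<Sum>t\<in>G. p t)" by (rule sum_nonneg) (use pnn in \<open>auto simp: G_def\<close>)
      then show ?thesis using PG by simp
    qed
    have Bpow: "(\<Sum>t\<in>B. p t * 2^(Is t)) = 2 * (\<Sum>t\<in>B. p t * log 2 (real (D t)))"
    proof -
      have "p t * 2^(Is t) = 2 * (p t * log 2 (real (D t)))" if "t \<in> B" for t
      proof -
        have I1: "1 \<le> Is t" using that unfolding B_def by auto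
        have "log 2 (real (D t)) = 2^(Is t - 1)" unfolding D_def by simp
        moreover have "(2::real)^(Is t) = 2 * 2^(Is t - 1)" using I1
          by (metis Suc_diff_le diff_Suc_1 power_Suc)
        ultimately show ?thesis by simp
      qed
      then have "(\<Sum>t\<in>B. p t * 2^(Is t)) = (\<Sum>t\<in>B. 2 * (p t * log 2 (real (D t))))"
        by (intro sum.cong) auto
      then show ?thesis by (simp only: sum_distrib_left)
    qed
    have lg: "log 2 (2 * eta / PB) = 1 + log 2 eta - log 2 PB"
      using eta0 PB0 by (simp add: log_divide_pos log_mult)
    have xl: "- (PB * log 2 PB) \<le> 3/4" by (rule xlog[OF PB0 PB1])
    have Bb: "(\<Sum>t\<in>B. p t * 2^(Is t)) \<le> 2 * PB + 2 * PB * log 2 eta + 3/2"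
    proof -
      have "(\<Sum>t\<in>B. p t * 2^(Is t)) \<le> 2 * (PB * log 2 (2 * eta / PB))" using Bpow tg by simp
      also have "\<dots> = 2 * PB + 2 * (PB * log 2 eta) - 2 * (PB * log 2 PB)" unfolding lg by (simp add: algebra_simps)
      finally show ?thesis using xl by simp
    qed
    have tot: "(\<Sum>t=1..n. p t * 2^(Is t)) \<le> 2 + H + 2 * (PB * log 2 eta) + 3/2"
      using Gb Bb spl[of "\<lambda>t. p t * 2^(Is t)"] by (simp add: algebra_simps)
    have et: "eta_term eta = max (log 2 eta + 2) 1" unfolding eta_term_def using eta0 by simp
    have key: "PB * log 2 eta \<le> max (log 2 eta + 2) 1 - 1"
    proof (cases "0 \<le> log 2 eta")
      case True
      then have "PB * log 2 eta \<le> 1 * log 2 eta" using PB1 by (intro mult_right_mono) auto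
      then show ?thesis by simp
    next
      case False
      then have "PB * log 2 eta \<le> 0" using PB0 by (intro mult_nonneg_nonpos) auto
      then show ?thesis by simp
    qed
    have "(\<Sum>t=1..n. p t * real (C t)) \<le> 4 * entropy n p + 8 * eta_term (emd n p ph) + 8"
      using E tot key et unfolding H_def eta_def by linarith
    then show ?thesis using part1 unfolding C_def by blast
  qed
qed

end
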